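(* Fix $\alpha\in[0,1]$, assume $\mathcal{N}_M>1$, and let $A_p>0$. Consider the open-loop male-scarcity system on $\mathbb{R}^3_+$: $M'=r\rho Ue^{-\sigma(M+A+U)}-\alpha\frac{A_p}{A_p+A}M-\mu M$, $A'=(1-r)\rho Ue^{-\sigma(M+A+U)}-\nu\frac{\gamma M}{A_p+A}A+\eta U-\delta A$, $U'=\nu\frac{\gamma M}{A_p+A}A-\eta U-\delta U$. (a) If $0<A_p<\tilde A_p^{crit}$, then the basin of attraction of $\mathbf{E}_0=(0,0,0)$ for this system contains $\{\mathbf{X}\in\mathbb{R}^3_+:\ \mathbf{E}_0\le\mathbf{X}<\tilde{\mathbf{E}}_{1,p}\}$. (b) If $A_p>\tilde A_p^{crit}$, then $\mathbf{E}_0$ is globally asymptotically stable on $\mathbb{R}^3_+$ for this system.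
   Context: Parameters: $r\in(0,1)$, $\rho,\sigma,\mu,\delta,\nu,\eta>0$, $\gamma\ge1$; $\mathcal{N}_M:=\frac{\gamma r\rho\nu}{\mu(\delta+\eta)}$. Auxiliary system: $M'=r\rho Ue^{-\sigma M}-\alpha\frac{A_p}{A_p+A}M-\mu M$, $A'=((1-r)\rho+\eta)U-\delta A$, $U'=\nu\frac{\gamma M}{A_p+A}A-(\eta+\delta)U$. $\tilde A_p^{crit}>0$ is the threshold (independent of $A_p$) such that for $A_p>\tilde A_p^{crit}$ the auxiliary system has no positive equilibrium and $\mathbf{E}_0$ is globally asymptotically stable for it on $\mathbb{R}^3_+$, while for $0<A_p<\tilde A_p^{crit}$ the auxiliary system has exactly two positive equilibria $\tilde{\mathbf{E}}_{1,p}<\tilde{\mathbf{E}}_{2,p}$ (componentwise) and the basin of $\mathbf{E}_0$ for the auxiliary system contains $\{\mathbf{E}_0\le\mathbf{X}<\tilde{\mathbf{E}}_{1,p}\}$. Order is componentwise. *)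

theory Defs
  imports "HOL-Analysis.Analysis"
begin

type_synonym state = "real \<times> real \<times> real"   (* (M, A, U) *)

definition full_field ::
  "real \<Rightarrow> real \<Rightarrow> real \<Rightarrow> real \<Rightarrow> real \<Rightarrow> real \<Rightarrow> real \<Rightarrow> real \<Rightarrow> real \<Rightarrow> real \<Rightarrow> state \<Rightarrow> state" where
  "full_field r \<rho> \<sigma> \<mu> \<delta> \<nu> \<eta> \<gamma> \<alpha> Ap =
     (\<lambda>(M, A, U).
       ( r * \<rho> * U * exp (- \<sigma> * (M + A + U)) - \<alpha> * (Ap / (Ap + A)) * M - \<mu> * M,
         (1 - r) * \<rho> * U * exp (- \<sigma> * (M + A + U)) - \<nu> * (\<gamma> * M / (Ap + A)) * A + \<eta> * U - \<delta> * A,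
         \<nu> * (\<gamma> * M / (Ap + A)) * A - \<eta> * U - \<delta> * U))"

definition aux_field ::
  "real \<Rightarrow> real \<Rightarrow> real \<Rightarrow> real \<Rightarrow> real \<Rightarrow> real \<Rightarrow> real \<Rightarrow> real \<Rightarrow> real \<Rightarrow> real \<Rightarrow> state \<Rightarrow> state" where
  "aux_field r \<rho> \<sigma> \<mu> \<delta> \<nu> \<eta> \<gamma> \<alpha> Ap =
     (\<lambda>(M, A, U).
       ( r * \<rho> * U * exp (- \<sigma> * M) - \<alpha> * (Ap / (Ap + A)) * M - \<mu> * M,
         ((1 - r) * \<rho> + \<eta>) * U - \<delta> * A,
         \<nu> * (\<gamma> * M / (Ap + A)) * A - (\<eta> + \<delta>) * U))"

definition N_M :: "real \<Rightarrow> real \<Rightarrow> real \<Rightarrow> real \<Rightarrow> real \<Rightarrow> real \<Rightarrow> real \<Rightarrow> real" where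
  "N_M r \<rho> \<mu> \<delta> \<nu> \<eta> \<gamma> = \<gamma> * r * \<rho> * \<nu> / (\<mu> * (\<delta> + \<eta>))"

definition R3plus :: "state set" where
  "R3plus = {(M, A, U). 0 \<le> M \<and> 0 \<le> A \<and> 0 \<le> U}"

definition le3 :: "state \<Rightarrow> state \<Rightarrow> bool" where
  "le3 X Y \<longleftrightarrow> fst X \<le> fst Y \<and> fst (snd X) \<le> fst (snd Y) \<and> snd (snd X) \<le> snd (snd Y)"

definition lt3 :: "state \<Rightarrow> state \<Rightarrow> bool" where
  "lt3 X Y \<longleftrightarrow> fst X < fst Y \<and> fst (snd X) < fst (snd Y) \<and> snd (snd X) < snd (snd Y)"

definition E0 :: state where "E0 = (0, 0, 0)"

definition positive_equilibria :: "(state \<Rightarrow> state) \<Rightarrow> state set" where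
  "positive_equilibria f = {E. lt3 E0 E \<and> f E = 0}"

definition is_solution :: "(state \<Rightarrow> state) \<Rightarrow> (real \<Rightarrow> state) \<Rightarrow> bool" where
  "is_solution f x \<longleftrightarrow>
     (\<forall>t\<ge>0. (x has_vector_derivative f (x t)) (at t within {0..}) \<and> x t \<in> R3plus)"

definition in_basin :: "(state \<Rightarrow> state) \<Rightarrow> state \<Rightarrow> state \<Rightarrow> bool" where
  "in_basin f E X0 \<longleftrightarrow>
     (\<exists>x. is_solution f x \<and> x 0 = X0) \<and>
     (\<forall>x. is_solution f x \<and> x 0 = X0 \<longrightarrow> (x \<longlongrightarrow> E) at_top)"

definition basin :: "(state \<Rightarrow> state) \<Rightarrow> state \<Rightarrow> state set" where
  "basin f E = {X0 \<in> R3plus. in_basin f E X0}"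

definition lyapunov_stable :: "(state \<Rightarrow> state) \<Rightarrow> state \<Rightarrow> bool" where
  "lyapunov_stable f E \<longleftrightarrow>
     (\<forall>\<epsilon>>0. \<exists>d>0. \<forall>x. is_solution f x \<and> dist (x 0) E < d \<longrightarrow> (\<forall>t\<ge>0. dist (x t) E < \<epsilon>))"

definition GAS_on_R3plus :: "(state \<Rightarrow> state) \<Rightarrow> state \<Rightarrow> bool" where
  "GAS_on_R3plus f E \<longleftrightarrow> lyapunov_stable f E \<and> R3plus \<subseteq> basin f E"

definition lower_box :: "state \<Rightarrow> state set" where
  "lower_box E1 = {X. le3 E0 X \<and> lt3 X E1}"

definition is_aux_threshold ::
  "real \<Rightarrow> real \<Rightarrow> real \<Rightarrow> real \<Rightarrow> real \<Rightarrow> real \<Rightarrow> real \<Rightarrow> real \<Rightarrow> real \<Rightarrow> real \<Rightarrow> bool" where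
  "is_aux_threshold r \<rho> \<sigma> \<mu> \<delta> \<nu> \<eta> \<gamma> \<alpha> c \<longleftrightarrow>
     0 < c \<and>
     (\<forall>Ap. c < Ap \<longrightarrow>
        positive_equilibria (aux_field r \<rho> \<sigma> \<mu> \<delta> \<nu> \<eta> \<gamma> \<alpha> Ap) = {} \<and>
        GAS_on_R3plus (aux_field r \<rho> \<sigma> \<mu> \<delta> \<nu> \<eta> \<gamma> \<alpha> Ap) E0) \<and>
     (\<forall>Ap. 0 < Ap \<and> Ap < c \<longrightarrow>
        (\<exists>E1 E2. lt3 E1 E2 \<and>
           positive_equilibria (aux_field r \<rho> \<sigma> \<mu> \<delta> \<nu> \<eta> \<gamma> \<alpha> Ap) = {E1, E2} \<and>
           lower_box E1 \<subseteq> basin (aux_field r \<rho> \<sigma> \<mu> \<delta> \<nu> \<eta> \<gamma> \<alpha> Ap) E0))"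

end

theory Submission
  imports Defs
begin


lemma deriv_within_extend:
  assumes "(x has_vector_derivative v) (at t within {0..b})" "0 \<le> t" "t < (b::real)"
  shows "(x has_vector_derivative v) (at t within {0..})"
proof -
  have "at t within {0..b} = at t within ({0..}::real set)"
    by (rule at_within_nhd[of t "{..<b}"]) (use assms in auto)
  with assms show ?thesis by simp
qed

lemma lip_cont:
  fixes f :: "'a::real_normed_vector \<Rightarrow> 'b::real_normed_vector"
  assumes lip: "\<And>a b. norm (f a - f b) \<le> L * norm (a - b)" and L: "0 < L"
  shows "continuous_on S f"
  unfolding continuous_on_iff
proof (intro ballI allI impI)
  fix x e assume "x \<in> S" "(0::real) < e"
  show "\<exists>d>0. \<forall>x'\<in>S. dist x' x < d \<longrightarrow> dist (f x') (f x) < e"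
  proof (intro exI[of _ "e / L"] conjI ballI impI)
    show "0 < e / L" using \<open>0 < e\<close> L by simp
    fix x' assume "dist x' x < e / L"
    then have "L * norm (x' - x) < e" using L by (simp add: dist_norm field_simps)
    with lip[of x' x] show "dist (f x') (f x) < e" by (simp add: dist_norm)
  qed
qed

lemma picard_global:
  fixes f :: "'a::banach \<Rightarrow> 'a"
  assumes lip: "\<And>a b. norm (f a - f b) \<le> L * norm (a - b)" and L: "0 < L"
  shows "\<exists>x. x 0 = x0 \<and> (\<forall>t\<ge>0. (x has_vector_derivative f (x t)) (at t within {0..}))"
proof -
  have contf: "\<And>S. continuous_on S f" by (rule lip_cont[OF lip L])
  define P where "P = rec_nat (\<lambda>t::real. x0) (\<lambda>n p t. x0 + integral {0..t} (\<lambda>s. f (p s)))"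
  have P0: "P 0 = (\<lambda>t. x0)" by (simp add: P_def)
  have PS: "\<And>n t. P (Suc n) t = x0 + integral {0..t} (\<lambda>s. f (P n s))" by (simp add: P_def)
  have contP: "\<And>T. continuous_on {0..T} (P n)" for n
  proof (induction n)
    case 0 then show ?case by (simp add: P0)
  next
    case (Suc n)
    have "continuous_on {0..T} (\<lambda>s. f (P n s))"
      by (rule continuous_on_compose2[OF contf Suc]) auto
    then have "continuous_on {0..T} (\<lambda>t. integral {0..t} (\<lambda>s. f (P n s)))"
      by (intro indefinite_integral_continuous_1 integrable_continuous_real)
    then show ?case by (simp add: PS continuous_on_add)
  qed
  have contfP: "continuous_on {0..T} (\<lambda>s. f (P n s))" for n T
    by (rule continuous_on_compose2[OF contf contP]) auto
  define B where "B = norm (f x0) / L"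
  have B0: "0 \<le> B" using L by (simp add: B_def)
  have bound: "\<And>t. 0 \<le> t \<Longrightarrow> norm (P (Suc n) t - P n t) \<le> B * (L * t)^(Suc n) / fact (Suc n)" for n
  proof (induction n)
    case 0
    then show ?case using L by (simp add: PS P0 B_def)
  next
    case (Suc n)
    fix t :: real assume t: "0 \<le> t"
    have eqd: "P (Suc (Suc n)) t - P (Suc n) t = integral {0..t} (\<lambda>s. f (P (Suc n) s) - f (P n s))"
      unfolding PS[of "Suc n" t] PS[of n t]
      by (simp add: Henstock_Kurzweil_Integration.integral_diff integrable_continuous_real contfP)
    have "norm (integral {0..t} (\<lambda>s. f (P (Suc n) s) - f (P n s))) \<le> integral {0..t} (\<lambda>s. L * (B * (L * s)^(Suc n) / fact (Suc n)))"
    proof (rule integral_norm_bound_integral)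
      show "(\<lambda>s. f (P (Suc n) s) - f (P n s)) integrable_on {0..t}"
        by (intro integrable_continuous_real continuous_on_diff contfP)
      show "(\<lambda>s. L * (B * (L * s)^(Suc n) / fact (Suc n))) integrable_on {0..t}"
        by (intro integrable_continuous_real continuous_intros) auto
      fix s assume s: "s \<in> {0..t}"
      have "norm (f (P (Suc n) s) - f (P n s)) \<le> L * norm (P (Suc n) s - P n s)" by (rule lip)
      also have "\<dots> \<le> L * (B * (L * s)^(Suc n) / fact (Suc n))"
        using Suc.IH[of s] s L by (intro mult_left_mono) auto
      finally show "norm (f (P (Suc n) s) - f (P n s)) \<le> L * (B * (L * s)^(Suc n) / fact (Suc n))" .
    qed
    also have "integral {0..t} (\<lambda>s. L * (B * (L * s)^(Suc n) / fact (Suc n))) = B * (L * t)^(Suc (Suc n)) / fact (Suc (Suc n))"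
    proof (rule integral_unique)
      have "((\<lambda>s. L * (B * (L * s)^(Suc n) / fact (Suc n))) has_integral
          ((\<lambda>s. B * (L * s)^(Suc (Suc n)) / fact (Suc (Suc n))) t - (\<lambda>s. B * (L * s)^(Suc (Suc n)) / fact (Suc (Suc n))) 0)) {0..t}"
      proof (rule fundamental_theorem_of_calculus[OF t])
        fix s assume "s \<in> {0..t}"
        have d1: "((\<lambda>s. s^(Suc (Suc n))) has_real_derivative real (Suc (Suc n)) * s^(Suc n)) (at s within {0..t})"
          using DERIV_pow[of "Suc (Suc n)" s "{0..t}"] by simp
        have d2: "((\<lambda>s. (B * L^(Suc (Suc n)) / fact (Suc (Suc n))) * s^(Suc (Suc n))) has_real_derivative
           (B * L^(Suc (Suc n)) / fact (Suc (Suc n))) * (real (Suc (Suc n)) * s^(Suc n))) (at s within {0..t})"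
          by (rule DERIV_cmult[OF d1])
        have e1: "(\<lambda>s. (B * L^(Suc (Suc n)) / fact (Suc (Suc n))) * s^(Suc (Suc n))) = (\<lambda>s. B * (L * s)^(Suc (Suc n)) / fact (Suc (Suc n)))"
          by (rule ext) (simp add: power_mult_distrib)
        have e2: "(B * L^(Suc (Suc n)) / fact (Suc (Suc n))) * (real (Suc (Suc n)) * s^(Suc n)) = L * (B * (L * s)^(Suc n) / fact (Suc n))"
        proof -
          have F: "fact (Suc (Suc n)) = real (Suc (Suc n)) * (fact (Suc n)::real)" by simp
          have "(B * L^(Suc (Suc n)) / fact (Suc (Suc n))) * (real (Suc (Suc n)) * s^(Suc n))
              = (B * L^(Suc (Suc n)) * s^(Suc n)) * (real (Suc (Suc n)) / (real (Suc (Suc n)) * fact (Suc n)))"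
            unfolding F by simp
          also have "\<dots> = (B * L^(Suc (Suc n)) * s^(Suc n)) / fact (Suc n)"
            by simp
          also have "\<dots> = L * (B * (L * s)^(Suc n) / fact (Suc n))"
            by (simp add: power_mult_distrib mult_ac)
          finally show ?thesis .
        qed
        show "((\<lambda>s. B * (L * s)^(Suc (Suc n)) / fact (Suc (Suc n))) has_vector_derivative L * (B * (L * s)^(Suc n) / fact (Suc n))) (at s within {0..t})"
          using d2 unfolding e1 e2 by (simp only: has_real_derivative_iff_has_vector_derivative)
      qed
      then show "((\<lambda>s. L * (B * (L * s)^(Suc n) / fact (Suc n))) has_integral B * (L * t)^(Suc (Suc n)) / fact (Suc (Suc n))) {0..t}"
        by simp
    qed
    finally show "norm (P (Suc (Suc n)) t - P (Suc n) t) \<le> B * (L * t)^(Suc (Suc n)) / fact (Suc (Suc n))" using eqd by simp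
  qed
  define X where "X t = x0 + suminf (\<lambda>i. P (Suc i) t - P i t)" for t
  have ul: "uniform_limit {0..T} P X sequentially" if T: "0 \<le> T" for T
  proof -
    define M where "M n = B * (L * T)^(Suc n) / fact (Suc n)" for n
    have sM: "summable M"
    proof -
      have "summable (\<lambda>n. inverse (fact n) * (L * T)^n)" by (rule summable_exp)
      then have "summable (\<lambda>n. inverse (fact (Suc n)) * (L * T)^(Suc n))"
        by (subst summable_Suc_iff)
      then have "summable (\<lambda>n. B * (inverse (fact (Suc n)) * (L * T)^(Suc n)))"
        by (rule summable_mult)
      moreover have "(\<lambda>n. B * (inverse (fact (Suc n)) * (L * T)^(Suc n))) = M"
        by (rule ext) (simp add: M_def divide_inverse mult_ac)
      ultimately show ?thesis by metis
    qed
    have U1: "uniform_limit {0..T} (\<lambda>n t. \<Sum>i<n. P (Suc i) t - P i t) (\<lambda>t. suminf (\<lambda>i. P (Suc i) t - P i t)) sequentially"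
    proof (rule Weierstrass_m_test[OF _ sM])
      fix n and t :: real assume t: "t \<in> {0..T}"
      then have "norm (P (Suc n) t - P n t) \<le> B * (L * t)^(Suc n) / fact (Suc n)"
        by (intro bound) auto
      also have "\<dots> \<le> M n" unfolding M_def using B0 L t
        by (intro divide_right_mono mult_left_mono power_mono) auto
      finally show "norm (P (Suc n) t - P n t) \<le> M n" .
    qed
    have tel: "(\<Sum>i<n. P (Suc i) t - P i t) = P n t - x0" for n t
      using sum_lessThan_telescope[of "\<lambda>i. P i t" n] by (simp add: P0)
    have dd: "dist (P n t) (X t) = dist (\<Sum>i<n. P (Suc i) t - P i t) (suminf (\<lambda>i. P (Suc i) t - P i t))" for n t
      unfolding tel X_def by (simp add: dist_norm algebra_simps)
    show ?thesis
      using U1 unfolding uniform_limit_iff dd .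
  qed
  have contX: "continuous_on {0..T} X" if "0 \<le> T" for T
    by (rule uniform_limit_theorem[OF always_eventually ul[OF that]]) (auto intro: contP)
  have inteq: "X t = x0 + integral {0..t} (\<lambda>s. f (X s))" if t: "0 \<le> t" for t
  proof -
    have uflim: "uniform_limit {0..t} (\<lambda>n s. f (P n s)) (\<lambda>s. f (X s)) sequentially"
    proof (rule uniform_limitI)
      fix e :: real assume e: "0 < e"
      have "\<forall>\<^sub>F n in sequentially. \<forall>s\<in>{0..t}. dist (P n s) (X s) < e / L"
        using uniform_limitD[OF ul[OF t]] e L by simp
      then show "\<forall>\<^sub>F n in sequentially. \<forall>s\<in>{0..t}. dist (f (P n s)) (f (X s)) < e"
      proof (rule eventually_mono, intro ballI)
        fix n s assume H: "\<forall>s\<in>{0..t}. dist (P n s) (X s) < e / L" and s: "s \<in> {0..t}"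
        have "dist (f (P n s)) (f (X s)) \<le> L * dist (P n s) (X s)"
          using lip by (simp add: dist_norm)
        also have "\<dots> < L * (e / L)" using H s L by (intro mult_strict_left_mono) auto
        finally show "dist (f (P n s)) (f (X s)) < e" using L by simp
      qed
    qed
    obtain I J where I: "\<And>n. ((\<lambda>s. f (P n s)) has_integral I n) {0..t}"
      and J: "((\<lambda>s. f (X s)) has_integral J) {0..t}" and IJ: "I \<longlonglongrightarrow> J"
      using uniform_limit_integral[OF uflim contfP] by auto
    have "(\<lambda>n. P n t) \<longlonglongrightarrow> X t"
      using tendsto_uniform_limitI[OF ul[OF t]] t by simp
    then have L1: "(\<lambda>n. P (Suc n) t) \<longlonglongrightarrow> X t" by (rule LIMSEQ_Suc)
    have "(\<lambda>n. P (Suc n) t) = (\<lambda>n. x0 + I n)"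
      using I by (simp add: PS integral_unique[OF I])
    with L1 have "(\<lambda>n. x0 + I n) \<longlonglongrightarrow> X t" by simp
    moreover have "(\<lambda>n. x0 + I n) \<longlonglongrightarrow> x0 + J" using IJ by (intro tendsto_intros)
    ultimately have "X t = x0 + J" by (rule LIMSEQ_unique)
    then show ?thesis using J by (simp add: integral_unique)
  qed
  have X0: "X 0 = x0" using inteq[of 0] by simp
  have "(X has_vector_derivative f (X t)) (at t within {0..})" if t: "0 \<le> t" for t
  proof -
    have cfX: "continuous_on {0..t+1} (\<lambda>s. f (X s))"
      by (rule continuous_on_compose2[OF contf contX]) (use t in auto)
    have "((\<lambda>u. integral {0..u} (\<lambda>s. f (X s))) has_vector_derivative f (X t)) (at t within {0..t+1})"
      by (rule integral_has_vector_derivative[OF cfX]) (use t in auto)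
    then have "((\<lambda>u. x0 + integral {0..u} (\<lambda>s. f (X s))) has_vector_derivative f (X t)) (at t within {0..t+1})"
      by (auto intro!: derivative_eq_intros)
    then have "(X has_vector_derivative f (X t)) (at t within {0..t+1})"
      by (rule has_vector_derivative_transform_within[of _ _ _ _ 1]) (use t inteq in auto)
    then show ?thesis by (rule deriv_within_extend) (use t in auto)
  qed
  with X0 show ?thesis by blast
qed


lemma exp_lip: fixes x y :: real assumes "0 \<le> x" "0 \<le> y" shows "\<bar>exp (-x) - exp (-y)\<bar> \<le> \<bar>x - y\<bar>"
proof -
  have key: "\<bar>exp (-x) - exp (-y)\<bar> \<le> y - x" if "0 \<le> x" "x \<le> y" for x y :: real
  proof -
    have e: "exp (-y) = exp (-x) * exp (-(y-x))" by (simp add: exp_add[symmetric])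
    have h0: "1 - (y - x) \<le> exp (-(y-x))" using exp_ge_add_one_self[of "-(y-x)"] by linarith
    have h1: "exp (-(y-x)) \<le> 1" using that by simp
    have a1: "exp (-x) \<le> 1" "0 \<le> exp (-x)" using that by auto
    have d: "exp (-x) - exp (-y) = exp (-x) * (1 - exp (-(y-x)))" unfolding e by (simp add: right_diff_distrib)
    have p1: "0 \<le> exp (-x) * (1 - exp (-(y-x)))" using a1 h1 by simp
    have "exp (-x) * (1 - exp (-(y-x))) \<le> (1 - exp (-(y-x)))"
      using mult_right_mono[of "exp (-x)" 1 "1 - exp (-(y-x))"] a1 h1 by simp
    with h0 have p2: "exp (-x) * (1 - exp (-(y-x))) \<le> y - x" by linarith
    show ?thesis unfolding d using p1 p2 by simp
  qed
  show ?thesis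
  proof (cases "x \<le> y")
    case True then show ?thesis using key[of x y] assms by simp
  next
    case False then show ?thesis using key[of y x] assms by (simp add: abs_minus_commute)
  qed
qed

lemma div_lip:
  fixes Ap K M A M' A' :: real
  assumes "0 < Ap" "0 \<le> A" "0 \<le> A'" "0 \<le> M'" "M' \<le> K"
  shows "\<bar>M / (Ap + A) - M' / (Ap + A')\<bar> \<le> \<bar>M - M'\<bar> / Ap + K * \<bar>A - A'\<bar> / Ap^2"
proof -
  have p: "Ap + A \<noteq> 0" "Ap + A' \<noteq> 0" using assms by auto
  have e: "M / (Ap + A) - M' / (Ap + A') = (M - M') / (Ap + A) + M' * (A' - A) / ((Ap + A) * (Ap + A'))"
    using p by (simp add: divide_simps) (simp add: algebra_simps)
  have "\<bar>(M - M') / (Ap + A)\<bar> = \<bar>M - M'\<bar> / (Ap + A)" using assms by simp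
  also have "\<dots> \<le> \<bar>M - M'\<bar> / Ap" using assms by (intro divide_left_mono) auto
  finally have 1: "\<bar>(M - M') / (Ap + A)\<bar> \<le> \<bar>M - M'\<bar> / Ap" .
  have "\<bar>M' * (A' - A) / ((Ap + A) * (Ap + A'))\<bar> = M' * \<bar>A - A'\<bar> / ((Ap + A) * (Ap + A'))"
    using assms by (simp add: abs_mult abs_minus_commute)
  also have "\<dots> \<le> K * \<bar>A - A'\<bar> / (Ap * Ap)"
    using assms by (intro frac_le mult_mono mult_right_mono) auto
  finally have 2: "\<bar>M' * (A' - A) / ((Ap + A) * (Ap + A'))\<bar> \<le> K * \<bar>A - A'\<bar> / Ap^2"
    by (simp add: power2_eq_square)
  have 3: "\<bar>M / (Ap + A) - M' / (Ap + A')\<bar> \<le> \<bar>(M - M') / (Ap + A)\<bar> + \<bar>M' * (A' - A) / ((Ap + A) * (Ap + A'))\<bar>"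
    unfolding e by (rule abs_triangle_ineq)
  show ?thesis using 1 2 3 by linarith
qed

lemma frac_lip:
  fixes Ap K M A M' A' :: real
  assumes "0 < Ap" "0 \<le> A" "0 \<le> A'" "0 \<le> M'" "M' \<le> K"
  shows "\<bar>M * A / (Ap + A) - M' * A' / (Ap + A')\<bar> \<le> \<bar>M - M'\<bar> + K * \<bar>A - A'\<bar> / Ap"
proof -
  have p: "Ap + A \<noteq> 0" "Ap + A' \<noteq> 0" using assms by auto
  have e: "M * A / (Ap + A) - M' * A' / (Ap + A') = (M - M') * (A / (Ap + A)) + M' * (A / (Ap + A) - A' / (Ap + A'))"
    using p by (simp add: divide_simps) (simp add: algebra_simps)
  have q: "A / (Ap + A) - A' / (Ap + A') = Ap * (A - A') / ((Ap + A) * (Ap + A'))"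
    using p by (simp add: divide_simps) (simp add: algebra_simps)
  have aa: "0 \<le> A / (Ap + A)" "A / (Ap + A) \<le> 1" using assms by auto
  have "\<bar>(M - M') * (A / (Ap + A))\<bar> = \<bar>M - M'\<bar> * (A / (Ap + A))" using aa by (simp only: abs_mult abs_of_nonneg)
  also have "\<dots> \<le> \<bar>M - M'\<bar>" using aa by (intro mult_left_le) auto
  finally have 1: "\<bar>(M - M') * (A / (Ap + A))\<bar> \<le> \<bar>M - M'\<bar>" .
  have "\<bar>M' * (A / (Ap + A) - A' / (Ap + A'))\<bar> = M' * (Ap * \<bar>A - A'\<bar> / ((Ap + A) * (Ap + A')))"
    using assms unfolding q by (simp add: abs_mult)
  also have "\<dots> \<le> K * (Ap * \<bar>A - A'\<bar> / (Ap * Ap))"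
    using assms by (intro mult_mono frac_le mult_mono) auto
  also have "\<dots> = K * \<bar>A - A'\<bar> / Ap" using assms by simp
  finally have 2: "\<bar>M' * (A / (Ap + A) - A' / (Ap + A'))\<bar> \<le> K * \<bar>A - A'\<bar> / Ap" .
  have 3: "\<bar>M * A / (Ap + A) - M' * A' / (Ap + A')\<bar> \<le> \<bar>(M - M') * (A / (Ap + A))\<bar> + \<bar>M' * (A / (Ap + A) - A' / (Ap + A'))\<bar>"
    unfolding e by (rule abs_triangle_ineq)
  show ?thesis using 1 2 3 by linarith
qed

lemma uexp_lip:
  fixes U U' S S' K \<sigma> :: real
  assumes "0 \<le> S" "0 \<le> S'" "0 \<le> U'" "U' \<le> K" "0 \<le> \<sigma>"
  shows "\<bar>U * exp (-\<sigma> * S) - U' * exp (-\<sigma> * S')\<bar> \<le> \<bar>U - U'\<bar> + K * \<sigma> * \<bar>S - S'\<bar>"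
proof -
  have e: "U * exp (-\<sigma> * S) - U' * exp (-\<sigma> * S') = (U - U') * exp (-(\<sigma> * S)) + U' * (exp (-(\<sigma> * S)) - exp (-(\<sigma> * S')))"
    by (simp add: algebra_simps)
  have ee: "0 \<le> exp (-(\<sigma> * S))" "exp (-(\<sigma> * S)) \<le> 1" using assms by auto
  have "\<bar>(U - U') * exp (-(\<sigma> * S))\<bar> = \<bar>U - U'\<bar> * exp (-(\<sigma> * S))" by (simp add: abs_mult)
  also have "\<dots> \<le> \<bar>U - U'\<bar>" using ee by (intro mult_left_le) auto
  finally have 1: "\<bar>(U - U') * exp (-(\<sigma> * S))\<bar> \<le> \<bar>U - U'\<bar>" .
  have "\<bar>exp (-(\<sigma> * S)) - exp (-(\<sigma> * S'))\<bar> \<le> \<bar>\<sigma> * S - \<sigma> * S'\<bar>"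
    using assms by (intro exp_lip) auto
  also have "\<dots> = \<sigma> * \<bar>S - S'\<bar>" using assms by (simp add: abs_mult right_diff_distrib[symmetric])
  finally have h: "\<bar>exp (-(\<sigma> * S)) - exp (-(\<sigma> * S'))\<bar> \<le> \<sigma> * \<bar>S - S'\<bar>" .
  have "\<bar>U' * (exp (-(\<sigma> * S)) - exp (-(\<sigma> * S')))\<bar> = U' * \<bar>exp (-(\<sigma> * S)) - exp (-(\<sigma> * S'))\<bar>"
    using assms by (simp add: abs_mult)
  also have "\<dots> \<le> K * (\<sigma> * \<bar>S - S'\<bar>)" using assms h by (intro mult_mono) auto
  finally have 2: "\<bar>U' * (exp (-(\<sigma> * S)) - exp (-(\<sigma> * S')))\<bar> \<le> K * \<sigma> * \<bar>S - S'\<bar>" by (simp add: mult.assoc)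
  have 3: "\<bar>U * exp (-\<sigma> * S) - U' * exp (-\<sigma> * S')\<bar> \<le> \<bar>(U - U') * exp (-(\<sigma> * S))\<bar> + \<bar>U' * (exp (-(\<sigma> * S)) - exp (-(\<sigma> * S')))\<bar>"
    unfolding e by (rule abs_triangle_ineq)
  show ?thesis using 1 2 3 by linarith
qed



lemma full_field_simp:
  "full_field r \<rho> \<sigma> \<mu> \<delta> \<nu> \<eta> \<gamma> \<alpha> Ap (M, A, U) =
       ( r * \<rho> * U * exp (- \<sigma> * (M + A + U)) - \<alpha> * (Ap / (Ap + A)) * M - \<mu> * M,
         (1 - r) * \<rho> * U * exp (- \<sigma> * (M + A + U)) - \<nu> * (\<gamma> * M / (Ap + A)) * A + \<eta> * U - \<delta> * A,
         \<nu> * (\<gamma> * M / (Ap + A)) * A - \<eta> * U - \<delta> * U)"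
  by (simp add: full_field_def)

lemma aux_field_simp:
  "aux_field r \<rho> \<sigma> \<mu> \<delta> \<nu> \<eta> \<gamma> \<alpha> Ap (M, A, U) =
       ( r * \<rho> * U * exp (- \<sigma> * M) - \<alpha> * (Ap / (Ap + A)) * M - \<mu> * M,
         ((1 - r) * \<rho> + \<eta>) * U - \<delta> * A,
         \<nu> * (\<gamma> * M / (Ap + A)) * A - (\<eta> + \<delta>) * U)"
  by (simp add: aux_field_def)

lemma norm3_le: "norm ((a::real), (b::real), (c::real)) \<le> \<bar>a\<bar> + \<bar>b\<bar> + \<bar>c\<bar>"
proof -
  have "norm (a, b, c) \<le> norm a + norm (b, c)" by (rule norm_Pair_le)
  also have "norm (b, c) \<le> norm b + norm c" by (rule norm_Pair_le)
  finally show ?thesis by simp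
qed

lemma comp_le_norm:
  fixes v :: state
  shows "\<bar>fst v\<bar> \<le> norm v" "\<bar>fst (snd v)\<bar> \<le> norm v" "\<bar>snd (snd v)\<bar> \<le> norm v"
proof -
  obtain a b c where v: "v = (a, b, c)" by (cases v) auto
  show "\<bar>fst v\<bar> \<le> norm v" using norm_fst_le[of a "(b,c)"] v by simp
  have "norm b \<le> norm (b, c)" by (rule norm_fst_le)
  also have "\<dots> \<le> norm (a, b, c)" by (rule norm_snd_le)
  finally show "\<bar>fst (snd v)\<bar> \<le> norm v" using v by simp
  have "norm c \<le> norm (b, c)" by (rule norm_snd_le)
  also have "\<dots> \<le> norm (a, b, c)" by (rule norm_snd_le)
  finally show "\<bar>snd (snd v)\<bar> \<le> norm v" using v by simp
qed

definition clampK :: "real \<Rightarrow> real \<Rightarrow> real" where "clampK K s = max 0 (min K s)"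

lemma clampK_lip: "\<bar>clampK K s - clampK K t\<bar> \<le> \<bar>s - t\<bar>"
  unfolding clampK_def by (auto simp: max_def min_def)

lemma clampK_range: "0 \<le> K \<Longrightarrow> 0 \<le> clampK K s \<and> clampK K s \<le> K"
  unfolding clampK_def by auto

definition clip :: "real \<Rightarrow> state \<Rightarrow> state" where
  "clip K z = (clampK K (fst z), clampK K (fst (snd z)), clampK K (snd (snd z)))"

lemma tri3: "\<bar>(a::real) - b - c\<bar> \<le> \<bar>a\<bar> + \<bar>b\<bar> + \<bar>c\<bar>" by (auto simp: abs_if)
lemma tri4: "\<bar>(a::real) - b + c - e\<bar> \<le> \<bar>a\<bar> + \<bar>b\<bar> + \<bar>c\<bar> + \<bar>e\<bar>" by (auto simp: abs_if)

context
  fixes r \<rho> \<sigma> \<mu> \<delta> \<nu> \<eta> \<gamma> \<alpha> Ap K :: real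
  assumes pars: "0 < r" "r < 1" "0 < \<rho>" "0 < \<sigma>" "0 < \<mu>" "0 < \<delta>" "0 < \<nu>" "0 < \<eta>" "1 \<le> \<gamma>"
    "0 \<le> \<alpha>" "0 < Ap" "0 \<le> K"
begin

lemma box_lip:
  fixes M A U M' A' U' :: real
  assumes box: "0 \<le> M" "M \<le> K" "0 \<le> A" "A \<le> K" "0 \<le> U" "U \<le> K"
    "0 \<le> M'" "M' \<le> K" "0 \<le> A'" "A' \<le> K" "0 \<le> U'" "U' \<le> K"
  defines "d \<equiv> \<bar>M - M'\<bar> + \<bar>A - A'\<bar> + \<bar>U - U'\<bar>"
  defines "C \<equiv> \<rho> * (1 + K * \<sigma>) + (\<alpha> + \<nu> * \<gamma>) * (1 + K / Ap) + \<mu> + \<eta> + \<delta>"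
  shows "norm (full_field r \<rho> \<sigma> \<mu> \<delta> \<nu> \<eta> \<gamma> \<alpha> Ap (M, A, U) - full_field r \<rho> \<sigma> \<mu> \<delta> \<nu> \<eta> \<gamma> \<alpha> Ap (M', A', U')) \<le> 3 * C * d"
proof -
  define X where "X = U * exp (- \<sigma> * (M + A + U)) - U' * exp (- \<sigma> * (M' + A' + U'))"
  define Y where "Y = M / (Ap + A) - M' / (Ap + A')"
  define Z where "Z = M * A / (Ap + A) - M' * A' / (Ap + A')"
  have d0: "0 \<le> d" "\<bar>M - M'\<bar> \<le> d" "\<bar>A - A'\<bar> \<le> d" "\<bar>U - U'\<bar> \<le> d" unfolding d_def by auto
  have hX: "\<bar>X\<bar> \<le> \<bar>U - U'\<bar> + K * \<sigma> * \<bar>(M + A + U) - (M' + A' + U')\<bar>"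
    unfolding X_def using box pars by (intro uexp_lip) auto
  have "\<bar>(M + A + U) - (M' + A' + U')\<bar> \<le> d" unfolding d_def by linarith
  then have "K * \<sigma> * \<bar>(M + A + U) - (M' + A' + U')\<bar> \<le> K * \<sigma> * d" using pars by (intro mult_left_mono) auto
  with hX d0 have hX': "\<bar>X\<bar> \<le> (1 + K * \<sigma>) * d" by (simp add: algebra_simps)
  have hY: "\<bar>Y\<bar> \<le> \<bar>M - M'\<bar> / Ap + K * \<bar>A - A'\<bar> / Ap^2"
    unfolding Y_def using box pars by (intro div_lip) auto
  have "Ap * \<bar>Y\<bar> \<le> Ap * (\<bar>M - M'\<bar> / Ap + K * \<bar>A - A'\<bar> / Ap^2)" using hY pars by (intro mult_left_mono) auto
  also have "\<dots> = \<bar>M - M'\<bar> + (K / Ap) * \<bar>A - A'\<bar>" using pars by (simp add: field_simps power2_eq_square)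
  also have "\<dots> \<le> d + (K / Ap) * d" using d0 pars by (intro add_mono mult_left_mono) auto
  finally have hY': "Ap * \<bar>Y\<bar> \<le> (1 + K / Ap) * d" by (simp add: algebra_simps)
  have hZ: "\<bar>Z\<bar> \<le> \<bar>M - M'\<bar> + K * \<bar>A - A'\<bar> / Ap"
    unfolding Z_def using box pars by (intro frac_lip) auto
  have "K * \<bar>A - A'\<bar> / Ap \<le> (K / Ap) * d" using d0 pars by (simp add: divide_right_mono mult_left_mono)
  with hZ d0 have hZ': "\<bar>Z\<bar> \<le> (1 + K / Ap) * d" by (simp add: algebra_simps)
  have e1: "fst (full_field r \<rho> \<sigma> \<mu> \<delta> \<nu> \<eta> \<gamma> \<alpha> Ap (M, A, U)) - fst (full_field r \<rho> \<sigma> \<mu> \<delta> \<nu> \<eta> \<gamma> \<alpha> Ap (M', A', U'))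
     = r * \<rho> * X - \<alpha> * (Ap * Y) - \<mu> * (M - M')"
    unfolding full_field_simp X_def Y_def by (simp add: algebra_simps)
  have e2: "fst (snd (full_field r \<rho> \<sigma> \<mu> \<delta> \<nu> \<eta> \<gamma> \<alpha> Ap (M, A, U))) - fst (snd (full_field r \<rho> \<sigma> \<mu> \<delta> \<nu> \<eta> \<gamma> \<alpha> Ap (M', A', U')))
     = (1 - r) * \<rho> * X - \<nu> * \<gamma> * Z + \<eta> * (U - U') - \<delta> * (A - A')"
    unfolding full_field_simp X_def Z_def by (simp add: algebra_simps)
  have e3: "snd (snd (full_field r \<rho> \<sigma> \<mu> \<delta> \<nu> \<eta> \<gamma> \<alpha> Ap (M, A, U))) - snd (snd (full_field r \<rho> \<sigma> \<mu> \<delta> \<nu> \<eta> \<gamma> \<alpha> Ap (M', A', U')))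
     = \<nu> * \<gamma> * Z - \<eta> * (U - U') - \<delta> * (U - U')"
    unfolding full_field_simp Z_def by (simp add: algebra_simps)
  have pX: "r * \<rho> * \<bar>X\<bar> \<le> \<rho> * ((1 + K * \<sigma>) * d)" "(1 - r) * \<rho> * \<bar>X\<bar> \<le> \<rho> * ((1 + K * \<sigma>) * d)"
  proof -
    have "r * \<rho> * \<bar>X\<bar> \<le> r * \<rho> * ((1 + K * \<sigma>) * d)" using hX' pars by (intro mult_left_mono) auto
    also have "\<dots> \<le> 1 * \<rho> * ((1 + K * \<sigma>) * d)" using pars d0 by (intro mult_right_mono) auto
    finally show "r * \<rho> * \<bar>X\<bar> \<le> \<rho> * ((1 + K * \<sigma>) * d)" by simp
    have "(1 - r) * \<rho> * \<bar>X\<bar> \<le> (1 - r) * \<rho> * ((1 + K * \<sigma>) * d)" using hX' pars by (intro mult_left_mono) auto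
    also have "\<dots> \<le> 1 * \<rho> * ((1 + K * \<sigma>) * d)" using pars d0 by (intro mult_right_mono) auto
    finally show "(1 - r) * \<rho> * \<bar>X\<bar> \<le> \<rho> * ((1 + K * \<sigma>) * d)" by simp
  qed
  have pY: "\<alpha> * (Ap * \<bar>Y\<bar>) \<le> \<alpha> * ((1 + K / Ap) * d)" using hY' pars by (intro mult_left_mono) auto
  have pZ: "\<nu> * \<gamma> * \<bar>Z\<bar> \<le> \<nu> * \<gamma> * ((1 + K / Ap) * d)" using hZ' pars by (intro mult_left_mono) auto
  have pM: "\<mu> * \<bar>M - M'\<bar> \<le> \<mu> * d" "\<eta> * \<bar>U - U'\<bar> \<le> \<eta> * d" "\<delta> * \<bar>A - A'\<bar> \<le> \<delta> * d" "\<delta> * \<bar>U - U'\<bar> \<le> \<delta> * d"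
    using d0 pars by (auto intro: mult_left_mono)
  have nn: "0 \<le> \<rho> * ((1 + K * \<sigma>) * d)" "0 \<le> \<alpha> * ((1 + K / Ap) * d)" "0 \<le> \<nu> * \<gamma> * ((1 + K / Ap) * d)"
     "0 \<le> \<mu> * d" "0 \<le> \<eta> * d" "0 \<le> \<delta> * d"
    using d0 pars by auto
  have Cd: "C * d = \<rho> * ((1 + K * \<sigma>) * d) + \<alpha> * ((1 + K / Ap) * d) + \<nu> * \<gamma> * ((1 + K / Ap) * d) + \<mu> * d + \<eta> * d + \<delta> * d"
    unfolding C_def by (simp add: algebra_simps)
  have a1: "\<bar>r * \<rho> * X - \<alpha> * (Ap * Y) - \<mu> * (M - M')\<bar> \<le> C * d"
  proof -
    have "\<bar>r * \<rho> * X - \<alpha> * (Ap * Y) - \<mu> * (M - M')\<bar> \<le> r * \<rho> * \<bar>X\<bar> + \<alpha> * (Ap * \<bar>Y\<bar>) + \<mu> * \<bar>M - M'\<bar>"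
      using tri3[of "r * \<rho> * X" "\<alpha> * (Ap * Y)" "\<mu> * (M - M')"] pars by (simp add: abs_mult)
    then show ?thesis unfolding Cd using pX pY pM nn by linarith
  qed
  have a2: "\<bar>(1 - r) * \<rho> * X - \<nu> * \<gamma> * Z + \<eta> * (U - U') - \<delta> * (A - A')\<bar> \<le> C * d"
  proof -
    have "\<bar>(1 - r) * \<rho> * X - \<nu> * \<gamma> * Z + \<eta> * (U - U') - \<delta> * (A - A')\<bar> \<le> (1 - r) * \<rho> * \<bar>X\<bar> + \<nu> * \<gamma> * \<bar>Z\<bar> + \<eta> * \<bar>U - U'\<bar> + \<delta> * \<bar>A - A'\<bar>"
      using tri4[of "(1 - r) * \<rho> * X" "\<nu> * \<gamma> * Z" "\<eta> * (U - U')" "\<delta> * (A - A')"] pars by (simp add: abs_mult)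
    then show ?thesis unfolding Cd using pX pZ pM nn by linarith
  qed
  have a3: "\<bar>\<nu> * \<gamma> * Z - \<eta> * (U - U') - \<delta> * (U - U')\<bar> \<le> C * d"
  proof -
    have "\<bar>\<nu> * \<gamma> * Z - \<eta> * (U - U') - \<delta> * (U - U')\<bar> \<le> \<nu> * \<gamma> * \<bar>Z\<bar> + \<eta> * \<bar>U - U'\<bar> + \<delta> * \<bar>U - U'\<bar>"
      using tri3[of "\<nu> * \<gamma> * Z" "\<eta> * (U - U')" "\<delta> * (U - U')"] pars by (simp add: abs_mult)
    then show ?thesis unfolding Cd using pX pZ pM nn by linarith
  qed
  let ?D = "full_field r \<rho> \<sigma> \<mu> \<delta> \<nu> \<eta> \<gamma> \<alpha> Ap (M, A, U) - full_field r \<rho> \<sigma> \<mu> \<delta> \<nu> \<eta> \<gamma> \<alpha> Ap (M', A', U')"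
  have "?D = (fst ?D, fst (snd ?D), snd (snd ?D))" by (simp only: prod.collapse)
  then have "norm ?D \<le> \<bar>fst ?D\<bar> + \<bar>fst (snd ?D)\<bar> + \<bar>snd (snd ?D)\<bar>" using norm3_le by metis
  also have "\<dots> \<le> C * d + C * d + C * d"
    using a1 a2 a3 e1 e2 e3 by (intro add_mono) auto
  finally show ?thesis by simp
qed

lemma Ftil_lip:
  defines "C \<equiv> \<rho> * (1 + K * \<sigma>) + (\<alpha> + \<nu> * \<gamma>) * (1 + K / Ap) + \<mu> + \<eta> + \<delta>"
  shows "norm (full_field r \<rho> \<sigma> \<mu> \<delta> \<nu> \<eta> \<gamma> \<alpha> Ap (clip K a) - full_field r \<rho> \<sigma> \<mu> \<delta> \<nu> \<eta> \<gamma> \<alpha> Ap (clip K b))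
     \<le> (9 * C + 1) * norm (a - b)"
proof -
  have C0: "0 \<le> C" unfolding C_def using pars by (intro add_nonneg_nonneg mult_nonneg_nonneg) auto
  let ?a1 = "clampK K (fst a)" and ?a2 = "clampK K (fst (snd a))" and ?a3 = "clampK K (snd (snd a))"
  let ?b1 = "clampK K (fst b)" and ?b2 = "clampK K (fst (snd b))" and ?b3 = "clampK K (snd (snd b))"
  have r: "0 \<le> ?a1 \<and> ?a1 \<le> K" "0 \<le> ?a2 \<and> ?a2 \<le> K" "0 \<le> ?a3 \<and> ?a3 \<le> K"
     "0 \<le> ?b1 \<and> ?b1 \<le> K" "0 \<le> ?b2 \<and> ?b2 \<le> K" "0 \<le> ?b3 \<and> ?b3 \<le> K"
    using clampK_range pars by auto
  have "norm (full_field r \<rho> \<sigma> \<mu> \<delta> \<nu> \<eta> \<gamma> \<alpha> Ap (?a1, ?a2, ?a3) - full_field r \<rho> \<sigma> \<mu> \<delta> \<nu> \<eta> \<gamma> \<alpha> Ap (?b1, ?b2, ?b3))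
     \<le> 3 * C * (\<bar>?a1 - ?b1\<bar> + \<bar>?a2 - ?b2\<bar> + \<bar>?a3 - ?b3\<bar>)"
    unfolding C_def using r by (intro box_lip) auto
  also have "\<dots> \<le> 3 * C * (\<bar>fst a - fst b\<bar> + \<bar>fst (snd a) - fst (snd b)\<bar> + \<bar>snd (snd a) - snd (snd b)\<bar>)"
    using C0 clampK_lip by (intro mult_left_mono add_mono) auto
  also have "\<dots> \<le> 3 * C * (3 * norm (a - b))"
    using C0 comp_le_norm[of "a - b"] by (intro mult_left_mono) auto
  also have "\<dots> \<le> (9 * C + 1) * norm (a - b)" by (simp add: algebra_simps)
  finally show ?thesis by (simp add: clip_def)
qed

end


lemma within_to_at:
  assumes "(f has_field_derivative v) (at t within {0..})" "0 < (t::real)"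
  shows "(f has_field_derivative v) (at t)"
proof -
  have "at t within {0..} = at t within (UNIV::real set)"
    by (rule at_within_nhd[of t "{0<..}"]) (use assms in auto)
  with assms show ?thesis by simp
qed

lemma deriv_cont_on:
  assumes "\<And>t. 0 \<le> t \<Longrightarrow> ((f::real\<Rightarrow>real) has_field_derivative f' t) (at t within {0..})" "0 \<le> a"
  shows "continuous_on {a..b} f"
  unfolding continuous_on_eq_continuous_within
proof
  fix t assume t: "t \<in> {a..b}"
  then have "continuous (at t within {0..}) f" using assms by (intro DERIV_continuous[OF assms(1)]) auto
  then show "continuous (at t within {a..b}) f" by (rule continuous_within_subset) (use assms in auto)
qed

lemma nonneg_invariant:
  fixes g g' :: "real \<Rightarrow> real"
  assumes D: "\<And>t. 0 \<le> t \<Longrightarrow> (g has_field_derivative g' t) (at t within {0..})"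
    and g0: "0 \<le> g 0"
    and neg: "\<And>t. 0 \<le> t \<Longrightarrow> g t < 0 \<Longrightarrow> 0 \<le> g' t"
    and t0: "0 \<le> t"
  shows "0 \<le> g t"
proof (rule ccontr)
  assume "\<not> 0 \<le> g t"
  then have gt: "g t < 0" by simp
  define Z where "Z = {0..t} \<inter> g -` {0..}"
  have cont: "continuous_on {0..t} g" by (rule deriv_cont_on[OF D]) auto
  have cl: "closed Z" unfolding Z_def by (rule continuous_closed_preimage[OF cont]) auto
  have ne: "0 \<in> Z" using g0 t0 by (auto simp: Z_def)
  have bd: "bdd_above Z" unfolding Z_def by (auto intro: bdd_aboveI[of _ t])
  define s where "s = Sup Z"
  have sZ: "s \<in> Z" unfolding s_def using closed_contains_Sup[of Z] cl ne bd by auto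
  then have s: "0 \<le> s" "s \<le> t" "0 \<le> g s" by (auto simp: Z_def)
  have "s \<noteq> t" using s gt by auto
  with s have st: "s < t" by simp
  have after: "g x < 0" if "s < x" "x \<le> t" for x
  proof (rule ccontr)
    assume "\<not> g x < 0"
    then have "x \<in> Z" using that s by (auto simp: Z_def)
    then have "x \<le> s" unfolding s_def using bd by (rule cSup_upper)
    with that show False by simp
  qed
  have "g s \<le> g t"
  proof (rule DERIV_nonneg_imp_increasing_open[OF less_imp_le[OF st]])
    fix x assume x: "s < x" "x < t"
    have "(g has_field_derivative g' x) (at x)" using D[of x] x s by (intro within_to_at) auto
    moreover have "0 \<le> g' x" using neg[of x] after[of x] x s by auto
    ultimately show "\<exists>y. (g has_real_derivative y) (at x) \<and> 0 \<le> y" by blast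
  next
    show "continuous_on {s..t} g" by (rule deriv_cont_on[OF D]) (use s in auto)
  qed
  with s gt show False by simp
qed

lemma pos_sq_deriv: "((\<lambda>s. (max s 0)^2) has_real_derivative 2 * max x 0) (at (x::real))"
proof (cases "x = 0")
  case True
  have "((\<lambda>y. ((max y 0)^2 - (max 0 0)^2) / (y - 0)) \<longlongrightarrow> 0) (at (0::real))"
  proof (rule Lim_null_comparison)
    show "\<forall>\<^sub>F y in at 0. norm (((max y 0)^2 - (max 0 0)^2) / (y - 0)) \<le> \<bar>y\<bar>"
      by (intro always_eventually allI) (auto simp: max_def power2_eq_square abs_mult)
    have "((\<lambda>y::real. \<bar>y\<bar>) \<longlongrightarrow> \<bar>0\<bar>) (at 0)" by (intro tendsto_intros)
    then show "((\<lambda>y::real. \<bar>y\<bar>) \<longlongrightarrow> 0) (at 0)" by simp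
  qed
  then show ?thesis using True by (simp add: has_field_derivative_iff)
next
  case False
  show ?thesis
  proof (cases "x > 0")
    case True
    have "((\<lambda>s. s^2) has_real_derivative 2 * x) (at x)" by (auto intro!: derivative_eq_intros)
    then have "((\<lambda>s. s^2) has_real_derivative 2 * max x 0) (at x)" using True by simp
    then show ?thesis
      by (rule has_field_derivative_transform_within_open[of _ _ _ "{0<..}"]) (use True in \<open>auto simp: max_def\<close>)
  next
    case f2: False
    with False have "x < 0" by simp
    have "((\<lambda>s. 0) has_real_derivative 2 * max x 0) (at x)" using \<open>x < 0\<close> by simp
    then show ?thesis
      by (rule has_field_derivative_transform_within_open[of _ _ _ "{..<0}"]) (use \<open>x < 0\<close> in \<open>auto simp: max_def\<close>)
  qed
qed



lemma vd_comps:
  fixes x :: "real \<Rightarrow> state"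
  assumes "(x has_vector_derivative v) (at t within S)"
  shows "((\<lambda>t. fst (x t)) has_real_derivative fst v) (at t within S)"
    "((\<lambda>t. fst (snd (x t))) has_real_derivative fst (snd v)) (at t within S)"
    "((\<lambda>t. snd (snd (x t))) has_real_derivative snd (snd v)) (at t within S)"
proof -
  show "((\<lambda>t. fst (x t)) has_real_derivative fst v) (at t within S)"
    using bounded_linear.has_vector_derivative[OF bounded_linear_fst assms]
    by (simp add: has_real_derivative_iff_has_vector_derivative)
  have bl: "bounded_linear (\<lambda>z::state. fst (snd z))"
    using bounded_linear_compose[OF bounded_linear_fst bounded_linear_snd] by (simp add: o_def)
  show "((\<lambda>t. fst (snd (x t))) has_real_derivative fst (snd v)) (at t within S)"
    using bounded_linear.has_vector_derivative[OF bl assms]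
    by (simp add: has_real_derivative_iff_has_vector_derivative)
  have bl2: "bounded_linear (\<lambda>z::state. snd (snd z))"
    using bounded_linear_compose[OF bounded_linear_snd bounded_linear_snd] by (simp add: o_def)
  show "((\<lambda>t. snd (snd (x t))) has_real_derivative snd (snd v)) (at t within S)"
    using bounded_linear.has_vector_derivative[OF bl2 assms]
    by (simp add: has_real_derivative_iff_has_vector_derivative)
qed

lemma uexp_bound: "0 \<le> c \<Longrightarrow> 0 < (\<sigma>::real) \<Longrightarrow> c * exp (- \<sigma> * c) \<le> 1 / \<sigma>"
proof -
  assume c: "0 \<le> c" and s: "0 < \<sigma>"
  have "\<sigma> * c \<le> exp (\<sigma> * c)" using exp_ge_add_one_self[of "\<sigma> * c"] by linarith
  then have "\<sigma> * c * exp (- (\<sigma> * c)) \<le> exp (\<sigma> * c) * exp (- (\<sigma> * c))"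
    by (intro mult_right_mono) auto
  also have "\<dots> = 1" by (simp add: exp_minus)
  finally have "\<sigma> * (c * exp (- \<sigma> * c)) \<le> 1" by (simp add: mult.assoc)
  then show ?thesis using s by (simp add: field_simps)
qed

context
  fixes r \<rho> \<sigma> \<mu> \<delta> \<nu> \<eta> \<gamma> \<alpha> Ap :: real
  assumes pars: "0 < r" "r < 1" "0 < \<rho>" "0 < \<sigma>" "0 < \<mu>" "0 < \<delta>" "0 < \<nu>" "0 < \<eta>" "1 \<le> \<gamma>"
    "0 \<le> \<alpha>" "0 < Ap"
begin

lemma existence:
  assumes X0: "X0 \<in> R3plus"
  shows "\<exists>x. is_solution (full_field r \<rho> \<sigma> \<mu> \<delta> \<nu> \<eta> \<gamma> \<alpha> Ap) x \<and> x 0 = X0"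
proof -
  let ?F = "full_field r \<rho> \<sigma> \<mu> \<delta> \<nu> \<eta> \<gamma> \<alpha> Ap"
  define S0 where "S0 = fst X0 + fst (snd X0) + snd (snd X0)"
  define m where "m = min \<mu> \<delta>"
  define B where "B = max S0 (\<rho> / (\<sigma> * m)) + 1"
  define K where "K = B + 1"
  have m0: "0 < m" using pars by (simp add: m_def)
  have X0c: "0 \<le> fst X0" "0 \<le> fst (snd X0)" "0 \<le> snd (snd X0)" using X0 by (auto simp: R3plus_def)
  have B0: "0 < B" "S0 < B" "\<rho> / \<sigma> < m * B"
  proof -
    show "0 < B" "S0 < B" using X0c by (auto simp: B_def S0_def)
    have h: "\<rho> / (\<sigma> * m) < B" by (simp add: B_def)
    have "m * (\<rho> / (\<sigma> * m)) < m * B" using mult_strict_left_mono[OF h m0] .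
    moreover have "m * (\<rho> / (\<sigma> * m)) = \<rho> / \<sigma>" using m0 by simp
    ultimately show "\<rho> / \<sigma> < m * B" by simp
  qed
  have K0: "0 \<le> K" using B0 by (simp add: K_def)
  define f where "f z = ?F (clip K z)" for z
  define C where "C = \<rho> * (1 + K * \<sigma>) + (\<alpha> + \<nu> * \<gamma>) * (1 + K / Ap) + \<mu> + \<eta> + \<delta>"
  have C0: "0 \<le> C" unfolding C_def using pars K0 by (intro add_nonneg_nonneg mult_nonneg_nonneg) auto
  have lip: "norm (f a - f b) \<le> (9 * C + 1) * norm (a - b)" for a b
    unfolding f_def C_def by (rule Ftil_lip) (use pars K0 in auto)
  obtain x where x0: "x 0 = X0" and xd: "\<And>t. 0 \<le> t \<Longrightarrow> (x has_vector_derivative f (x t)) (at t within {0..})"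
    using picard_global[of f "9 * C + 1" X0, OF lip] C0 by auto
  define x1 where "x1 t = fst (x t)" for t
  define x2 where "x2 t = fst (snd (x t))" for t
  define x3 where "x3 t = snd (snd (x t))" for t
  define c1 where "c1 t = clampK K (x1 t)" for t
  define c2 where "c2 t = clampK K (x2 t)" for t
  define c3 where "c3 t = clampK K (x3 t)" for t
  have fx: "f (x t) = ?F (c1 t, c2 t, c3 t)" for t
    by (simp add: f_def clip_def c1_def c2_def c3_def x1_def x2_def x3_def)
  have cr: "0 \<le> c1 t" "c1 t \<le> K" "0 \<le> c2 t" "c2 t \<le> K" "0 \<le> c3 t" "c3 t \<le> K" for t
    unfolding c1_def c2_def c3_def using clampK_range[OF K0] by auto
  have D1: "(x1 has_real_derivative fst (f (x t))) (at t within {0..})" if "0 \<le> t" for t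
    unfolding x1_def by (rule vd_comps(1)[OF xd[OF that]])
  have D2: "(x2 has_real_derivative fst (snd (f (x t)))) (at t within {0..})" if "0 \<le> t" for t
    unfolding x2_def by (rule vd_comps(2)[OF xd[OF that]])
  have D3: "(x3 has_real_derivative snd (snd (f (x t)))) (at t within {0..})" if "0 \<le> t" for t
    unfolding x3_def by (rule vd_comps(3)[OF xd[OF that]])
  have n1: "0 \<le> x1 t" if "0 \<le> t" for t
  proof (rule nonneg_invariant[OF D1])
    show "0 \<le> x1 0" using x0 X0c by (simp add: x1_def)
    fix s assume "0 \<le> s" "x1 s < 0"
    then have "c1 s = 0" by (simp add: c1_def clampK_def)
    then show "0 \<le> fst (f (x s))" unfolding fx full_field_simp using pars cr by simp
  qed (use that in auto)
  have n2: "0 \<le> x2 t" if "0 \<le> t" for t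
  proof (rule nonneg_invariant[OF D2])
    show "0 \<le> x2 0" using x0 X0c by (simp add: x2_def)
    fix s assume "0 \<le> s" "x2 s < 0"
    then have "c2 s = 0" by (simp add: c2_def clampK_def)
    then show "0 \<le> fst (snd (f (x s)))" unfolding fx full_field_simp using pars cr by simp
  qed (use that in auto)
  have n3: "0 \<le> x3 t" if "0 \<le> t" for t
  proof (rule nonneg_invariant[OF D3])
    show "0 \<le> x3 0" using x0 X0c by (simp add: x3_def)
    fix s assume "0 \<le> s" "x3 s < 0"
    then have "c3 s = 0" by (simp add: c3_def clampK_def)
    then show "0 \<le> snd (snd (f (x s)))" unfolding fx full_field_simp using pars cr by simp
  qed (use that in auto)
  have DS: "((\<lambda>t. B - (x1 t + x2 t + x3 t)) has_real_derivative
      0 - (fst (f (x t)) + fst (snd (f (x t))) + snd (snd (f (x t))))) (at t within {0..})" if "0 \<le> t" for t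
    by (intro DERIV_diff DERIV_add DERIV_const D1 D2 D3 that)
  have sb: "0 \<le> B - (x1 t + x2 t + x3 t)" if "0 \<le> t" for t
  proof (rule nonneg_invariant[OF DS])
    show "0 \<le> B - (x1 0 + x2 0 + x3 0)" using x0 B0 by (simp add: x1_def x2_def x3_def S0_def)
    fix s assume s: "0 \<le> s" "B - (x1 s + x2 s + x3 s) < 0"
    have nn: "0 \<le> x1 s" "0 \<le> x2 s" "0 \<le> x3 s" using n1 n2 n3 s by auto
    have ceq: "c1 s = min K (x1 s)" "c2 s = min K (x2 s)" "c3 s = min K (x3 s)"
      using nn K0 by (auto simp: c1_def c2_def c3_def clampK_def)
    have csum: "B < c1 s + c2 s + c3 s"
    proof (cases "x1 s \<le> K \<and> x2 s \<le> K \<and> x3 s \<le> K")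
      case True then show ?thesis using ceq s by simp
    next
      case False then show ?thesis using ceq nn K_def B0 by (auto simp: min_def)
    qed
    define E where "E = exp (- \<sigma> * (c1 s + c2 s + c3 s))"
    have "E \<le> exp (- \<sigma> * c3 s)" unfolding E_def using cr pars
      by (simp add: mult_left_mono)
    then have "c3 s * E \<le> c3 s * exp (- \<sigma> * c3 s)" using cr by (intro mult_left_mono) auto
    also have "\<dots> \<le> 1 / \<sigma>" using cr pars by (intro uexp_bound) auto
    finally have "\<rho> * (c3 s * E) \<le> \<rho> * (1 / \<sigma>)" using pars by (intro mult_left_mono) auto
    then have t1: "\<rho> * c3 s * E \<le> \<rho> / \<sigma>" by (simp add: mult.assoc)
    have t2: "0 \<le> \<alpha> * (Ap / (Ap + c2 s)) * c1 s" using pars cr by simp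
    have t3: "m * (c1 s + c2 s + c3 s) \<le> \<mu> * c1 s + \<delta> * c2 s + \<delta> * c3 s"
      using cr unfolding m_def by (simp add: distrib_left add_mono mult_right_mono)
    have t4: "m * B < m * (c1 s + c2 s + c3 s)" using csum m0 by simp
    have eq: "fst (f (x s)) + fst (snd (f (x s))) + snd (snd (f (x s)))
       = \<rho> * c3 s * E - \<alpha> * (Ap / (Ap + c2 s)) * c1 s - (\<mu> * c1 s + \<delta> * c2 s + \<delta> * c3 s)"
      unfolding fx full_field_simp E_def by (simp add: algebra_simps)
    show "0 \<le> 0 - (fst (f (x s)) + fst (snd (f (x s))) + snd (snd (f (x s))))"
      unfolding eq using t1 t2 t3 t4 B0 by linarith
  qed (use that in auto)
  have fxF: "f (x t) = ?F (x t)" and inR: "x t \<in> R3plus" if "0 \<le> t" for t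
  proof -
    have b: "x1 t \<le> B" "x2 t \<le> B" "x3 t \<le> B" using sb[OF that] n1[OF that] n2[OF that] n3[OF that] by auto
    have "c1 t = x1 t" "c2 t = x2 t" "c3 t = x3 t"
      using b n1[OF that] n2[OF that] n3[OF that] by (auto simp: c1_def c2_def c3_def clampK_def K_def)
    then show "f (x t) = ?F (x t)" unfolding fx by (simp add: x1_def x2_def x3_def)
    show "x t \<in> R3plus" using n1[OF that] n2[OF that] n3[OF that]
      by (cases "x t") (auto simp: R3plus_def x1_def x2_def x3_def)
  qed
  have "is_solution ?F x" unfolding is_solution_def
    using xd fxF inR by auto
  with x0 show ?thesis by blast
qed
end


lemma c1_exp:
  fixes U u M m A \<sigma> :: real
  assumes "0 \<le> u" "0 \<le> U" "m \<le> M" "0 \<le> m" "0 \<le> A" "0 < \<sigma>"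
  shows "U * exp (- \<sigma> * (M + A + U)) - u * exp (- \<sigma> * m) \<le> max (U - u) 0"
proof -
  define E1 where "E1 = exp (- \<sigma> * (M + A + U))"
  define E2 where "E2 = exp (- \<sigma> * m)"
  have "- \<sigma> * (M + A + U) \<le> - \<sigma> * m" using assms by (simp add: mult_left_mono)
  then have e12: "E1 \<le> E2" unfolding E1_def E2_def by simp
  have e1: "0 \<le> E1" "E1 \<le> 1" unfolding E1_def using assms by (auto simp: mult_nonneg_nonneg)
  show ?thesis
  proof (cases "U \<le> u")
    case True
    have "U * E1 \<le> u * E1" using True e1 by (intro mult_right_mono) auto
    also have "\<dots> \<le> u * E2" using e12 assms by (intro mult_left_mono) auto
    finally show ?thesis unfolding E1_def E2_def by simp
  next
    case False
    have "u * E1 \<le> u * E2" using e12 assms by (intro mult_left_mono) auto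
    moreover have "(U - u) * E1 \<le> (U - u) * 1" using False e1 by (intro mult_left_mono) auto
    ultimately have "U * E1 - u * E2 \<le> U - u" by (simp add: algebra_simps)
    then show ?thesis unfolding E1_def E2_def by simp
  qed
qed

lemma c1_div:
  fixes Ap A a m M R :: real
  assumes "0 < Ap" "0 \<le> A" "0 \<le> a" "0 \<le> m" "m \<le> R" "m \<le> M"
  shows "Ap / (Ap + a) * m - Ap / (Ap + A) * M \<le> R / Ap * max (A - a) 0"
proof -
  have p: "Ap + a \<noteq> 0" "Ap + A \<noteq> 0" "0 < Ap + a" "0 < Ap + A" using assms by auto
  have "Ap / (Ap + A) * m \<le> Ap / (Ap + A) * M" using assms p by (intro mult_left_mono) auto
  moreover have eq: "Ap / (Ap + a) * m - Ap / (Ap + A) * m = m * (Ap * (A - a) / ((Ap + a) * (Ap + A)))"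
    using p by (simp add: divide_simps) (simp add: algebra_simps)
  moreover have "m * (Ap * (A - a) / ((Ap + a) * (Ap + A))) \<le> R / Ap * max (A - a) 0"
  proof (cases "A \<le> a")
    case True
    have hx: "Ap * (A - a) / ((Ap + a) * (Ap + A)) \<le> 0" using True p assms
      by (intro divide_nonpos_pos mult_nonneg_nonpos) auto
    have "m * (Ap * (A - a) / ((Ap + a) * (Ap + A))) \<le> 0" by (rule mult_nonneg_nonpos[OF _ hx]) (use assms in simp)
    moreover have "0 \<le> R / Ap * max (A - a) 0" using assms by auto
    ultimately show ?thesis by linarith
  next
    case False
    have "Ap * (A - a) / ((Ap + a) * (Ap + A)) \<le> Ap * (A - a) / (Ap * Ap)"
      using False p assms by (intro divide_left_mono mult_mono mult_pos_pos) auto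
    also have "\<dots> = (A - a) / Ap" using assms by simp
    finally have h: "Ap * (A - a) / ((Ap + a) * (Ap + A)) \<le> (A - a) / Ap" .
    have "m * (Ap * (A - a) / ((Ap + a) * (Ap + A))) \<le> R * ((A - a) / Ap)"
      using h assms False p by (intro mult_mono) auto
    then show ?thesis using False by simp
  qed
  ultimately show ?thesis by linarith
qed

lemma c3_frac:
  fixes Ap A a m M R :: real
  assumes "0 < Ap" "0 \<le> A" "0 \<le> a" "0 \<le> m" "m \<le> R"
  shows "M * A / (Ap + A) - m * a / (Ap + a) \<le> max (M - m) 0 + R / Ap * max (A - a) 0"
proof -
  have p: "Ap + a \<noteq> 0" "Ap + A \<noteq> 0" "0 < Ap + a" "0 < Ap + A" using assms by auto
  have e: "M * A / (Ap + A) - m * a / (Ap + a) = (M - m) * (A / (Ap + A)) + m * (A / (Ap + A) - a / (Ap + a))"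
    using p by (simp add: divide_simps) (simp add: algebra_simps)
  have aa: "0 \<le> A / (Ap + A)" "A / (Ap + A) \<le> 1" using assms by auto
  have 1: "(M - m) * (A / (Ap + A)) \<le> max (M - m) 0"
  proof (cases "M \<le> m")
    case True
    have "(M - m) * (A / (Ap + A)) \<le> 0" by (rule mult_nonpos_nonneg) (use True aa in auto)
    then show ?thesis by simp
  next
    case False
    have "(M - m) * (A / (Ap + A)) \<le> (M - m) * 1" using False aa by (intro mult_left_mono) auto
    then show ?thesis using False by simp
  qed
  have q: "A / (Ap + A) - a / (Ap + a) = Ap * (A - a) / ((Ap + a) * (Ap + A))"
    using p by (simp add: divide_simps) (simp add: algebra_simps)
  have 2: "m * (A / (Ap + A) - a / (Ap + a)) \<le> R / Ap * max (A - a) 0"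
  proof (cases "A \<le> a")
    case True
    have hx: "Ap * (A - a) / ((Ap + a) * (Ap + A)) \<le> 0" using True p assms
      by (intro divide_nonpos_pos mult_nonneg_nonpos) auto
    have "m * (A / (Ap + A) - a / (Ap + a)) \<le> 0" unfolding q by (rule mult_nonneg_nonpos[OF _ hx]) (use assms in simp)
    moreover have "0 \<le> R / Ap * max (A - a) 0" using assms by auto
    ultimately show ?thesis by linarith
  next
    case False
    have "Ap * (A - a) / ((Ap + a) * (Ap + A)) \<le> Ap * (A - a) / (Ap * Ap)"
      using False p assms by (intro divide_left_mono mult_mono mult_pos_pos) auto
    also have "\<dots> = (A - a) / Ap" using assms by simp
    finally have h: "Ap * (A - a) / ((Ap + a) * (Ap + A)) \<le> (A - a) / Ap" .
    have "m * (Ap * (A - a) / ((Ap + a) * (Ap + A))) \<le> R * ((A - a) / Ap)"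
      using h assms False p by (intro mult_mono) auto
    then show ?thesis using False unfolding q by simp
  qed
  show ?thesis unfolding e using 1 2 by linarith
qed

lemma sq3: "((p1::real) + p2 + p3)^2 \<le> 3 * (p1^2 + p2^2 + p3^2)"
proof -
  have "0 \<le> (p1 - p2)^2 + (p2 - p3)^2 + (p1 - p3)^2" by simp
  then show ?thesis by (simp add: power2_eq_square algebra_simps)
qed

context
  fixes r \<rho> \<sigma> \<mu> \<delta> \<nu> \<eta> \<gamma> \<alpha> Ap :: real
  assumes pars: "0 < r" "r < 1" "0 < \<rho>" "0 < \<sigma>" "0 < \<mu>" "0 < \<delta>" "0 < \<nu>" "0 < \<eta>" "1 \<le> \<gamma>"
    "0 \<le> \<alpha>" "0 < Ap"
begin

lemma comparison:
  assumes x: "is_solution (full_field r \<rho> \<sigma> \<mu> \<delta> \<nu> \<eta> \<gamma> \<alpha> Ap) x"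
    and y: "is_solution (aux_field r \<rho> \<sigma> \<mu> \<delta> \<nu> \<eta> \<gamma> \<alpha> Ap) y"
    and xy0: "x 0 = y 0" and t: "0 \<le> t"
  shows "le3 (x t) (y t)"
proof -
  let ?F = "full_field r \<rho> \<sigma> \<mu> \<delta> \<nu> \<eta> \<gamma> \<alpha> Ap"
  let ?G = "aux_field r \<rho> \<sigma> \<mu> \<delta> \<nu> \<eta> \<gamma> \<alpha> Ap"
  have xd: "(x has_vector_derivative ?F (x s)) (at s within {0..})" "x s \<in> R3plus" if "0 \<le> s" for s
    using x that by (auto simp: is_solution_def)
  have yd: "(y has_vector_derivative ?G (y s)) (at s within {0..})" "y s \<in> R3plus" if "0 \<le> s" for s
    using y that by (auto simp: is_solution_def)
  define x1 where "x1 s = fst (x s)" for s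
  define x2 where "x2 s = fst (snd (x s))" for s
  define x3 where "x3 s = snd (snd (x s))" for s
  define y1 where "y1 s = fst (y s)" for s
  define y2 where "y2 s = fst (snd (y s))" for s
  define y3 where "y3 s = snd (snd (y s))" for s
  have xeq: "x s = (x1 s, x2 s, x3 s)" "y s = (y1 s, y2 s, y3 s)" for s
    by (simp_all add: x1_def x2_def x3_def y1_def y2_def y3_def)
  have nn: "0 \<le> x1 s" "0 \<le> x2 s" "0 \<le> x3 s" "0 \<le> y1 s" "0 \<le> y2 s" "0 \<le> y3 s" if "0 \<le> s" for s
    using xd(2)[OF that] yd(2)[OF that] unfolding xeq by (auto simp: R3plus_def)
  define fx1 where "fx1 s = fst (?F (x s))" for s
  define fx2 where "fx2 s = fst (snd (?F (x s)))" for s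
  define fx3 where "fx3 s = snd (snd (?F (x s)))" for s
  define gy1 where "gy1 s = fst (?G (y s))" for s
  define gy2 where "gy2 s = fst (snd (?G (y s)))" for s
  define gy3 where "gy3 s = snd (snd (?G (y s)))" for s
  have Dx: "(x1 has_real_derivative fx1 s) (at s within {0..})" "(x2 has_real_derivative fx2 s) (at s within {0..})"
    "(x3 has_real_derivative fx3 s) (at s within {0..})" if "0 \<le> s" for s
    unfolding x1_def x2_def x3_def fx1_def fx2_def fx3_def using vd_comps[OF xd(1)[OF that]] by auto
  have Dy: "(y1 has_real_derivative gy1 s) (at s within {0..})" "(y2 has_real_derivative gy2 s) (at s within {0..})"
    "(y3 has_real_derivative gy3 s) (at s within {0..})" if "0 \<le> s" for s
    unfolding y1_def y2_def y3_def gy1_def gy2_def gy3_def using vd_comps[OF yd(1)[OF that]] by auto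
  have cy1: "continuous_on {0..t} y1" by (rule deriv_cont_on[OF Dy(1)]) auto
  obtain smax where "smax \<in> {0..t}" and smax: "\<And>s. s \<in> {0..t} \<Longrightarrow> y1 s \<le> y1 smax"
    using continuous_attains_sup[OF compact_Icc _ cy1] t by auto
  define R where "R = y1 smax"
  have R0: "0 \<le> R" unfolding R_def using nn \<open>smax \<in> {0..t}\<close> by auto
  have yR: "y1 s \<le> R" if "s \<in> {0..t}" for s using smax[OF that] by (simp add: R_def)
  define L0 where "L0 = \<rho> + \<eta> + \<nu> * \<gamma> + (\<alpha> + \<nu> * \<gamma>) * (R / Ap)"
  have L00: "0 \<le> L0" unfolding L0_def using pars R0 by (intro add_nonneg_nonneg mult_nonneg_nonneg) auto
  define p1 where "p1 s = max (x1 s - y1 s) 0" for s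
  define p2 where "p2 s = max (x2 s - y2 s) 0" for s
  define p3 where "p3 s = max (x3 s - y3 s) 0" for s
  define P where "P s = p1 s + p2 s + p3 s" for s
  have p0: "0 \<le> p1 s" "0 \<le> p2 s" "0 \<le> p3 s" "p1 s \<le> P s" "p2 s \<le> P s" "p3 s \<le> P s" for s
    by (auto simp: P_def p1_def p2_def p3_def)
  have Pnn: "0 \<le> P s" for s using p0[of s] by (simp add: P_def)
  have k1: "p1 s * (fx1 s - gy1 s) \<le> p1 s * (L0 * P s)" if s: "s \<in> {0..t}" for s
  proof (cases "x1 s \<le> y1 s")
    case True then show ?thesis by (simp add: p1_def)
  next
    case False
    have n: "0 \<le> x1 s" "0 \<le> x2 s" "0 \<le> x3 s" "0 \<le> y1 s" "0 \<le> y2 s" "0 \<le> y3 s" using nn s by auto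
    have e: "fx1 s - gy1 s = r * \<rho> * (x3 s * exp (- \<sigma> * (x1 s + x2 s + x3 s)) - y3 s * exp (- \<sigma> * y1 s))
        + \<alpha> * (Ap / (Ap + y2 s) * y1 s - Ap / (Ap + x2 s) * x1 s) - \<mu> * (x1 s - y1 s)"
      unfolding fx1_def gy1_def xeq full_field_simp aux_field_simp by (simp add: algebra_simps)
    have h1: "x3 s * exp (- \<sigma> * (x1 s + x2 s + x3 s)) - y3 s * exp (- \<sigma> * y1 s) \<le> p3 s"
      unfolding p3_def using n False pars by (intro c1_exp) auto
    have h2: "Ap / (Ap + y2 s) * y1 s - Ap / (Ap + x2 s) * x1 s \<le> R / Ap * p2 s"
      unfolding p2_def using n False pars yR[OF s] by (intro c1_div) auto
    have "r * \<rho> * (x3 s * exp (- \<sigma> * (x1 s + x2 s + x3 s)) - y3 s * exp (- \<sigma> * y1 s)) \<le> r * \<rho> * p3 s"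
      using h1 pars by (intro mult_left_mono) auto
    also have "\<dots> \<le> \<rho> * P s" using pars p0 by (intro mult_mono) auto
    finally have i1: "r * \<rho> * (x3 s * exp (- \<sigma> * (x1 s + x2 s + x3 s)) - y3 s * exp (- \<sigma> * y1 s)) \<le> \<rho> * P s" .
    have "\<alpha> * (Ap / (Ap + y2 s) * y1 s - Ap / (Ap + x2 s) * x1 s) \<le> \<alpha> * (R / Ap * p2 s)"
      using h2 pars by (intro mult_left_mono) auto
    also have "\<dots> \<le> \<alpha> * (R / Ap * P s)" using pars p0 R0 by (intro mult_left_mono) auto
    finally have i2: "\<alpha> * (Ap / (Ap + y2 s) * y1 s - Ap / (Ap + x2 s) * x1 s) \<le> \<alpha> * (R / Ap) * P s" by simp
    have i3: "0 \<le> \<mu> * (x1 s - y1 s)" using False pars by simp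
    have i4: "0 \<le> \<eta> * P s" "0 \<le> \<nu> * \<gamma> * P s" "0 \<le> \<nu> * \<gamma> * (R / Ap) * P s"
      using pars Pnn[of s] R0 by (auto intro!: mult_nonneg_nonneg)
    have LP: "L0 * P s = \<rho> * P s + \<eta> * P s + \<nu> * \<gamma> * P s + \<alpha> * (R / Ap) * P s + \<nu> * \<gamma> * (R / Ap) * P s"
      unfolding L0_def by (simp add: algebra_simps)
    have "fx1 s - gy1 s \<le> L0 * P s" unfolding e LP using i1 i2 i3 i4 by linarith
    then show ?thesis using p0 by (intro mult_left_mono) auto
  qed
  have k2: "p2 s * (fx2 s - gy2 s) \<le> p2 s * (L0 * P s)" if s: "s \<in> {0..t}" for s
  proof (cases "x2 s \<le> y2 s")
    case True then show ?thesis by (simp add: p2_def)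
  next
    case False
    have n: "0 \<le> x1 s" "0 \<le> x2 s" "0 \<le> x3 s" "0 \<le> y1 s" "0 \<le> y2 s" "0 \<le> y3 s" using nn s by auto
    define E where "E = exp (- \<sigma> * (x1 s + x2 s + x3 s))"
    have e: "fx2 s - gy2 s = (1 - r) * \<rho> * (x3 s * E - y3 s) - \<nu> * (\<gamma> * x1 s / (Ap + x2 s)) * x2 s
        + \<eta> * (x3 s - y3 s) - \<delta> * (x2 s - y2 s)"
      unfolding fx2_def gy2_def xeq full_field_simp aux_field_simp E_def by (simp add: algebra_simps)
    have E1: "E \<le> 1" "0 \<le> E" unfolding E_def using n pars by auto
    have "x3 s * E \<le> x3 s * 1" using E1 n by (intro mult_left_mono) auto
    then have "x3 s * E - y3 s \<le> p3 s" by (simp add: p3_def)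
    then have "(1 - r) * \<rho> * (x3 s * E - y3 s) \<le> (1 - r) * \<rho> * p3 s" using pars by (intro mult_left_mono) auto
    also have "\<dots> \<le> \<rho> * P s" using pars p0 by (intro mult_mono) auto
    finally have i1: "(1 - r) * \<rho> * (x3 s * E - y3 s) \<le> \<rho> * P s" .
    have i2: "0 \<le> \<nu> * (\<gamma> * x1 s / (Ap + x2 s)) * x2 s" using n pars by simp
    have "\<eta> * (x3 s - y3 s) \<le> \<eta> * P s" using pars p0[of s] by (intro mult_left_mono) (auto simp: p3_def)
    moreover have "0 \<le> \<delta> * (x2 s - y2 s)" using False pars by simp
    moreover have i4: "0 \<le> \<nu> * \<gamma> * P s" "0 \<le> \<alpha> * (R / Ap) * P s" "0 \<le> \<nu> * \<gamma> * (R / Ap) * P s"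
      using pars Pnn[of s] R0 by (auto intro!: mult_nonneg_nonneg)
    moreover have LP: "L0 * P s = \<rho> * P s + \<eta> * P s + \<nu> * \<gamma> * P s + \<alpha> * (R / Ap) * P s + \<nu> * \<gamma> * (R / Ap) * P s"
      unfolding L0_def by (simp add: algebra_simps)
    ultimately have "fx2 s - gy2 s \<le> L0 * P s" unfolding e using i1 i2 by linarith
    then show ?thesis using p0 by (intro mult_left_mono) auto
  qed
  have k3: "p3 s * (fx3 s - gy3 s) \<le> p3 s * (L0 * P s)" if s: "s \<in> {0..t}" for s
  proof (cases "x3 s \<le> y3 s")
    case True then show ?thesis by (simp add: p3_def)
  next
    case False
    have n: "0 \<le> x1 s" "0 \<le> x2 s" "0 \<le> x3 s" "0 \<le> y1 s" "0 \<le> y2 s" "0 \<le> y3 s" using nn s by auto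
    have e: "fx3 s - gy3 s = \<nu> * \<gamma> * (x1 s * x2 s / (Ap + x2 s) - y1 s * y2 s / (Ap + y2 s)) - (\<eta> + \<delta>) * (x3 s - y3 s)"
      unfolding fx3_def gy3_def xeq full_field_simp aux_field_simp by (simp add: algebra_simps)
    have h: "x1 s * x2 s / (Ap + x2 s) - y1 s * y2 s / (Ap + y2 s) \<le> p1 s + R / Ap * p2 s"
      unfolding p1_def p2_def using n pars yR[OF s] by (intro c3_frac) auto
    have "\<nu> * \<gamma> * (x1 s * x2 s / (Ap + x2 s) - y1 s * y2 s / (Ap + y2 s)) \<le> \<nu> * \<gamma> * (p1 s + R / Ap * p2 s)"
      using h pars by (intro mult_left_mono) auto
    also have "\<dots> = \<nu> * \<gamma> * p1 s + \<nu> * \<gamma> * (R / Ap) * p2 s" by (simp add: algebra_simps)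
    also have "\<dots> \<le> \<nu> * \<gamma> * P s + \<nu> * \<gamma> * (R / Ap) * P s"
      using pars p0 R0 by (intro add_mono mult_left_mono) auto
    finally have i1: "\<nu> * \<gamma> * (x1 s * x2 s / (Ap + x2 s) - y1 s * y2 s / (Ap + y2 s)) \<le> \<nu> * \<gamma> * P s + \<nu> * \<gamma> * (R / Ap) * P s" .
    have i2: "0 \<le> (\<eta> + \<delta>) * (x3 s - y3 s)" using False pars by simp
    have i4: "0 \<le> \<rho> * P s" "0 \<le> \<eta> * P s" "0 \<le> \<alpha> * (R / Ap) * P s"
      using pars Pnn[of s] R0 by (auto intro!: mult_nonneg_nonneg)
    have LP: "L0 * P s = \<rho> * P s + \<eta> * P s + \<nu> * \<gamma> * P s + \<alpha> * (R / Ap) * P s + \<nu> * \<gamma> * (R / Ap) * P s"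
      unfolding L0_def by (simp add: algebra_simps)
    have "fx3 s - gy3 s \<le> L0 * P s" unfolding e LP using i1 i2 i4 by linarith
    then show ?thesis using p0 by (intro mult_left_mono) auto
  qed
  define V where "V s = (p1 s)^2 + (p2 s)^2 + (p3 s)^2" for s
  define V' where "V' s = 2 * p1 s * (fx1 s - gy1 s) + 2 * p2 s * (fx2 s - gy2 s) + 2 * p3 s * (fx3 s - gy3 s)" for s
  have DV: "(V has_real_derivative V' s) (at s within {0..})" if "0 \<le> s" for s
  proof -
    have a: "((\<lambda>s. (p1 s)^2) has_real_derivative 2 * p1 s * (fx1 s - gy1 s)) (at s within {0..})"
      unfolding p1_def using DERIV_chain2[OF pos_sq_deriv DERIV_diff[OF Dx(1)[OF that] Dy(1)[OF that]]] by simp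
    have b: "((\<lambda>s. (p2 s)^2) has_real_derivative 2 * p2 s * (fx2 s - gy2 s)) (at s within {0..})"
      unfolding p2_def using DERIV_chain2[OF pos_sq_deriv DERIV_diff[OF Dx(2)[OF that] Dy(2)[OF that]]] by simp
    have c: "((\<lambda>s. (p3 s)^2) has_real_derivative 2 * p3 s * (fx3 s - gy3 s)) (at s within {0..})"
      unfolding p3_def using DERIV_chain2[OF pos_sq_deriv DERIV_diff[OF Dx(3)[OF that] Dy(3)[OF that]]] by simp
    show ?thesis unfolding V_def V'_def by (intro DERIV_add a b c)
  qed
  have Vnn: "0 \<le> V s" for s unfolding V_def by simp
  have VV: "V' s \<le> 6 * L0 * V s" if s: "s \<in> {0..t}" for s
  proof -
    have "V' s \<le> 2 * (p1 s * (L0 * P s)) + 2 * (p2 s * (L0 * P s)) + 2 * (p3 s * (L0 * P s))"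
      unfolding V'_def using k1[OF s] k2[OF s] k3[OF s] by (simp add: mult.assoc)
    also have "\<dots> = 2 * L0 * (P s)^2" by (simp add: P_def power2_eq_square algebra_simps)
    also have "\<dots> \<le> 2 * L0 * (3 * V s)" unfolding P_def V_def using sq3 L00 by (intro mult_left_mono) auto
    finally show ?thesis by simp
  qed
  define W where "W s = exp (- (6 * L0) * s) * V s" for s
  have DW: "(W has_real_derivative exp (- (6 * L0) * s) * (V' s - 6 * L0 * V s)) (at s within {0..})" if "0 \<le> s" for s
  proof -
    have e: "((\<lambda>s. exp (- (6 * L0) * s)) has_real_derivative exp (- (6 * L0) * s) * (- (6 * L0))) (at s within {0..})"
      by (auto intro!: derivative_eq_intros)
    have "(W has_real_derivative exp (- (6 * L0) * s) * V' s + exp (- (6 * L0) * s) * (- (6 * L0)) * V s) (at s within {0..})"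
      unfolding W_def using DERIV_mult[OF e DV[OF that]] by (simp add: algebra_simps)
    then show ?thesis by (simp add: algebra_simps)
  qed
  have "W t \<le> W 0"
  proof (rule DERIV_nonpos_imp_decreasing_open[OF t])
    fix s assume s: "0 < s" "s < t"
    have "(W has_real_derivative exp (- (6 * L0) * s) * (V' s - 6 * L0 * V s)) (at s)"
      using DW[of s] s by (intro within_to_at) auto
    moreover have "exp (- (6 * L0) * s) * (V' s - 6 * L0 * V s) \<le> 0"
      using VV[of s] s by (intro mult_nonneg_nonpos) auto
    ultimately show "\<exists>y. (W has_real_derivative y) (at s) \<and> y \<le> 0" by blast
  next
    show "continuous_on {0..t} W" by (rule deriv_cont_on[OF DW]) auto
  qed
  moreover have "W 0 = 0" using xy0 by (simp add: W_def V_def p1_def p2_def p3_def x1_def x2_def x3_def y1_def y2_def y3_def)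
  moreover have "0 \<le> W t" using Vnn by (simp add: W_def)
  ultimately have "W t = 0" by simp
  then have "V t = 0" by (simp add: W_def)
  then have "p1 t = 0" "p2 t = 0" "p3 t = 0" using p0[of t] unfolding V_def by (auto simp: add_nonneg_eq_0_iff)
  then show ?thesis unfolding le3_def by (simp add: p1_def p2_def p3_def x1_def x2_def x3_def y1_def y2_def y3_def max_def split: if_splits)
qed

end


lemma norm3_mono:
  assumes "0 \<le> (a::real)" "a \<le> a'" "0 \<le> (b::real)" "b \<le> b'" "0 \<le> (c::real)" "c \<le> c'"
  shows "norm (a, b, c) \<le> norm (a', b', c')"
proof -
  have "norm (b, c) \<le> norm (b', c')" unfolding norm_Pair using assms
    by (intro real_sqrt_le_mono add_mono power_mono) auto
  then show ?thesis unfolding norm_Pair[of a] norm_Pair[of a'] using assms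
    by (intro real_sqrt_le_mono add_mono power_mono) auto
qed

lemma E0_zero: "E0 = 0" by (simp add: E0_def zero_prod_def)

context
  fixes r \<rho> \<sigma> \<mu> \<delta> \<nu> \<eta> \<gamma> \<alpha> Ap :: real
  assumes pars: "0 < r" "r < 1" "0 < \<rho>" "0 < \<sigma>" "0 < \<mu>" "0 < \<delta>" "0 < \<nu>" "0 < \<eta>" "1 \<le> \<gamma>"
    "0 \<le> \<alpha>" "0 < Ap"
begin

lemma norm_le_aux:
  assumes x: "is_solution (full_field r \<rho> \<sigma> \<mu> \<delta> \<nu> \<eta> \<gamma> \<alpha> Ap) x"
    and y: "is_solution (aux_field r \<rho> \<sigma> \<mu> \<delta> \<nu> \<eta> \<gamma> \<alpha> Ap) y"
    and xy0: "x 0 = y 0" and t: "0 \<le> t"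
  shows "norm (x t) \<le> norm (y t)"
proof -
  have le: "le3 (x t) (y t)" by (rule comparison[OF pars x y xy0 t])
  have "x t \<in> R3plus" using x t by (auto simp: is_solution_def)
  moreover obtain a b c where xt: "x t = (a, b, c)" by (cases "x t") auto
  moreover obtain a' b' c' where yt: "y t = (a', b', c')" by (cases "y t") auto
  ultimately have h: "0 \<le> a" "a \<le> a'" "0 \<le> b" "b \<le> b'" "0 \<le> c" "c \<le> c'" using le
    by (auto simp: R3plus_def le3_def)
  show ?thesis unfolding xt yt by (rule norm3_mono[OF h])
qed

lemma basin_transfer:
  assumes "X0 \<in> basin (aux_field r \<rho> \<sigma> \<mu> \<delta> \<nu> \<eta> \<gamma> \<alpha> Ap) E0"
  shows "X0 \<in> basin (full_field r \<rho> \<sigma> \<mu> \<delta> \<nu> \<eta> \<gamma> \<alpha> Ap) E0"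
proof -
  let ?F = "full_field r \<rho> \<sigma> \<mu> \<delta> \<nu> \<eta> \<gamma> \<alpha> Ap"
  let ?G = "aux_field r \<rho> \<sigma> \<mu> \<delta> \<nu> \<eta> \<gamma> \<alpha> Ap"
  have X0: "X0 \<in> R3plus" and ib: "in_basin ?G E0 X0" using assms by (auto simp: basin_def)
  obtain y where y: "is_solution ?G y" "y 0 = X0" and ylim: "(y \<longlongrightarrow> E0) at_top"
    using ib unfolding in_basin_def by blast
  have "\<exists>x. is_solution ?F x \<and> x 0 = X0" by (rule existence[OF pars X0])
  moreover have "(x \<longlongrightarrow> E0) at_top" if x: "is_solution ?F x" "x 0 = X0" for x
  proof -
    have "((\<lambda>t. norm (y t)) \<longlongrightarrow> 0) at_top" using ylim unfolding E0_zero by (rule tendsto_norm_zero)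
    moreover have "\<forall>\<^sub>F t in at_top. norm (x t) \<le> norm (y t)"
      using eventually_ge_at_top[of 0] by eventually_elim (rule norm_le_aux[OF x(1) y(1)], use x y in auto)
    ultimately have "(x \<longlongrightarrow> 0) at_top" by (intro Lim_null_comparison[of x "\<lambda>t. norm (y t)"])
    then show ?thesis by (simp add: E0_zero)
  qed
  ultimately show ?thesis using X0 by (auto simp: basin_def in_basin_def)
qed

end

theorem theorem2:
  fixes r \<rho> \<sigma> \<mu> \<delta> \<nu> \<eta> \<gamma> \<alpha> Ap Apcrit :: real
  assumes "0 < r" "r < 1" "0 < \<rho>" "0 < \<sigma>" "0 < \<mu>" "0 < \<delta>" "0 < \<nu>" "0 < \<eta>" "1 \<le> \<gamma>"
    and "0 \<le> \<alpha>" "\<alpha> \<le> 1"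
    and "N_M r \<rho> \<mu> \<delta> \<nu> \<eta> \<gamma> > 1"
    and "0 < Ap"
    and "is_aux_threshold r \<rho> \<sigma> \<mu> \<delta> \<nu> \<eta> \<gamma> \<alpha> Apcrit"
  shows "(Ap < Apcrit \<longrightarrow>
            (\<forall>E1 E2. lt3 E1 E2 \<and>
               positive_equilibria (aux_field r \<rho> \<sigma> \<mu> \<delta> \<nu> \<eta> \<gamma> \<alpha> Ap) = {E1, E2} \<longrightarrow>
               lower_box E1 \<subseteq> basin (full_field r \<rho> \<sigma> \<mu> \<delta> \<nu> \<eta> \<gamma> \<alpha> Ap) E0))
       \<and> (Apcrit < Ap \<longrightarrow> GAS_on_R3plus (full_field r \<rho> \<sigma> \<mu> \<delta> \<nu> \<eta> \<gamma> \<alpha> Ap) E0)"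
proof -
  let ?F = "full_field r \<rho> \<sigma> \<mu> \<delta> \<nu> \<eta> \<gamma> \<alpha> Ap"
  let ?G = "aux_field r \<rho> \<sigma> \<mu> \<delta> \<nu> \<eta> \<gamma> \<alpha> Ap"
  note pars = assms(1-10) assms(13)
  have thr: "is_aux_threshold r \<rho> \<sigma> \<mu> \<delta> \<nu> \<eta> \<gamma> \<alpha> Apcrit" by fact
  have A: "lower_box E1 \<subseteq> basin ?F E0"
    if lt: "Ap < Apcrit" and E: "lt3 E1 E2" "positive_equilibria ?G = {E1, E2}" for E1 E2
  proof -
    obtain E1' E2' where E': "lt3 E1' E2'" "positive_equilibria ?G = {E1', E2'}"
      and box: "lower_box E1' \<subseteq> basin ?G E0"
      using thr lt assms(13) unfolding is_aux_threshold_def by blast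
    have "E1 = E1'"
    proof (rule ccontr)
      assume ne: "E1 \<noteq> E1'"
      have "{E1, E2} = {E1', E2'}" using E E' by simp
      with ne have "E1 = E2'" "E2 = E1'" by (auto simp: doubleton_eq_iff)
      with E E' show False by (auto simp: lt3_def)
    qed
    then have "lower_box E1 \<subseteq> basin ?G E0" using box by simp
    then show ?thesis using basin_transfer[OF pars] by blast
  qed
  have B: "GAS_on_R3plus ?F E0" if lt: "Apcrit < Ap"
  proof -
    have gas: "GAS_on_R3plus ?G E0" using thr lt unfolding is_aux_threshold_def by blast
    then have ls: "lyapunov_stable ?G E0" and bs: "R3plus \<subseteq> basin ?G E0" by (auto simp: GAS_on_R3plus_def)
    have "R3plus \<subseteq> basin ?F E0" using bs basin_transfer[OF pars] by blast
    moreover have "lyapunov_stable ?F E0" unfolding lyapunov_stable_def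
    proof (intro allI impI)
      fix e :: real assume e: "0 < e"
      obtain d where d: "0 < d" and dd: "\<And>y. is_solution ?G y \<and> dist (y 0) E0 < d \<Longrightarrow> (\<forall>t\<ge>0. dist (y t) E0 < e)"
        using ls e unfolding lyapunov_stable_def by blast
      show "\<exists>d>0. \<forall>x. is_solution ?F x \<and> dist (x 0) E0 < d \<longrightarrow> (\<forall>t\<ge>0. dist (x t) E0 < e)"
      proof (intro exI[of _ d] conjI allI impI d)
        fix x t assume H: "is_solution ?F x \<and> dist (x 0) E0 < d" and t: "0 \<le> (t::real)"
        have "x 0 \<in> R3plus" using H by (auto simp: is_solution_def)
        then have "x 0 \<in> basin ?G E0" using bs by auto
        then obtain y where y: "is_solution ?G y" "y 0 = x 0"
          by (auto simp: basin_def in_basin_def)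
        have "dist (y t) E0 < e" using dd[of y] y H t by auto
        moreover have "norm (x t) \<le> norm (y t)" using norm_le_aux[OF pars _ y(1) _ t] H y by auto
        ultimately show "dist (x t) E0 < e" by (simp add: E0_zero dist_norm)
      qed
    qed
    ultimately show ?thesis by (simp add: GAS_on_R3plus_def)
  qed
  show ?thesis using A B by blast
qed


end
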